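(* Let $\lambda>0$ and $0<\theta<\pi/2$. For every $n\ge0$, $\mathcal C_{\pi/2-\theta}(V_n)\cap H_n=\emptyset$.
   Context: $\mathcal P_\lambda$: homogeneous Poisson point process of intensity $\lambda$ on $\mathbb R^2$ under its Palm distribution (point added at origin $o$). Polar coordinates $(r_v,\varphi_v)$, $\varphi_v\in[-\pi,\pi)$ from $e_1$; for $\alpha\in(0,\pi/2)$, $\mathcal C_\alpha=\{v:r_v>0,|\varphi_v|\le\alpha\}$, $\mathcal C_\alpha(v)=v+\mathcal C_\alpha$. Navigation: $V_0=o$, $V_{i+1}=\arg\min\{|v-V_i|:v\in\mathcal P_\lambda\cap\mathcal C_\theta(V_i)\}$, $U_i=V_i-V_{i-1}$. History sets: $H_0=\emptyset$, $H_1=\mathcal C_\theta(U_1)\cap B(o,|U_1|)$, $H_n=\mathcal C_\theta(V_{n-1}+U_n)\cap(H_{n-1}\cup B(V_{n-1},|U_n|))$ for $n\ge2$, where $B(x,r)$ is the open ball of radius $r$ about $x$. *)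

theory Defs
  imports "HOL-Analysis.Analysis"
begin

text \<open>The plane R^2 is modelled by the complex numbers; the polar angle of v is Arg v
  (values in (-pi,pi]; the paper uses [-pi,pi), which makes no difference for |angle| < pi/2).\<close>

definition cone :: "real \<Rightarrow> complex set" where
  "cone \<alpha> = {v. v \<noteq> 0 \<and> \<bar>Arg v\<bar> \<le> \<alpha>}"

definition cone_at :: "real \<Rightarrow> complex \<Rightarrow> complex set" where
  "cone_at \<alpha> x = {v. v - x \<in> cone \<alpha>}"

definition locally_finite :: "complex set \<Rightarrow> bool" where
  "locally_finite P \<longleftrightarrow> (\<forall>B. bounded B \<longrightarrow> finite (P \<inter> B))"

definition nav_path :: "complex set \<Rightarrow> real \<Rightarrow> (nat \<Rightarrow> complex) \<Rightarrow> bool" where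
  "nav_path P \<theta> V \<longleftrightarrow> V 0 = 0 \<and>
     (\<forall>i. V (Suc i) \<in> P \<inter> cone_at \<theta> (V i) \<and>
          (\<forall>v \<in> P \<inter> cone_at \<theta> (V i). cmod (V (Suc i) - V i) \<le> cmod (v - V i)))"

definition incr :: "(nat \<Rightarrow> complex) \<Rightarrow> nat \<Rightarrow> complex" where
  "incr V i = V i - V (i - 1)"

fun hist :: "real \<Rightarrow> (nat \<Rightarrow> complex) \<Rightarrow> nat \<Rightarrow> complex set" where
  "hist \<theta> V 0 = {}"
| "hist \<theta> V (Suc 0) = cone_at \<theta> (incr V 1) \<inter> ball 0 (cmod (incr V 1))"
| "hist \<theta> V (Suc (Suc n)) =
     cone_at \<theta> (V (Suc n) + incr V (Suc (Suc n))) \<inter>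
       (hist \<theta> V (Suc n) \<union> ball (V (Suc n)) (cmod (incr V (Suc (Suc n)))))"

end

theory Submission
  imports Defs
begin

lemma Im_cmod_sin: "Im v = cmod v * sin (Arg v)"
  by (metis Im_rcis rcis_cmod_Arg)

lemma Re_cmod_cos: "Re v = cmod v * cos (Arg v)"
  by (metis Re_rcis rcis_cmod_Arg)

lemma cone_iff:
  assumes "0 \<le> a" "a \<le> pi"
  shows "v \<in> cone a \<longleftrightarrow> v \<noteq> 0 \<and> cos a * cmod v \<le> Re v"
proof (cases "v = 0")
  case True then show ?thesis by (simp add: cone_def)
next
  case False
  have c: "cos (Arg v) = cos \<bar>Arg v\<bar>" by (simp add: abs_if)
  have r: "0 \<le> \<bar>Arg v\<bar>" "\<bar>Arg v\<bar> \<le> pi" using Arg_bounded[of v] by auto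
  have "(\<bar>Arg v\<bar> \<le> a) \<longleftrightarrow> cos a \<le> cos \<bar>Arg v\<bar>"
    using cos_mono_le_eq[OF assms r(1) r(2)] by simp
  also have "\<dots> \<longleftrightarrow> cos a * cmod v \<le> Re v"
    using False by (simp add: Re_cmod_cos mult.commute)
  finally show ?thesis using False by (simp add: cone_def)
qed

lemma cone_add:
  assumes "0 < t" "t < pi/2" "a \<in> cone t" "b \<in> cone t"
  shows "a + b \<in> cone t"
proof -
  have t: "0 \<le> t" "t \<le> pi" using assms by auto
  have cpos: "cos t > 0" using assms by (intro cos_gt_zero) auto
  have A: "a \<noteq> 0" "cos t * cmod a \<le> Re a" using assms(3) cone_iff[OF t] by auto
  have B: "b \<noteq> 0" "cos t * cmod b \<le> Re b" using assms(4) cone_iff[OF t] by auto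
  have "cos t * cmod (a+b) \<le> cos t * (cmod a + cmod b)"
    using cpos norm_triangle_ineq[of a b] by (simp add: mult_left_mono)
  also have "\<dots> \<le> Re (a+b)" using A B by (simp add: algebra_simps)
  finally have 1: "cos t * cmod (a+b) \<le> Re (a+b)" .
  have "0 < cos t * cmod a" using cpos A by simp
  moreover have "0 \<le> cos t * cmod b" using cpos by simp
  ultimately have "Re (a+b) > 0" using A B by simp
  hence "Re (a + b) \<noteq> 0" by linarith
  hence "a + b \<noteq> 0" by (metis zero_complex.sel(1))
  with 1 show ?thesis using cone_iff[OF t] by auto
qed

lemma inner_nonneg:
  assumes "0 < t" "t < pi/2" "a \<in> cone t" "b \<in> cone (pi/2 - t)"
  shows "0 \<le> Re (a * cnj b)"
proof -
  have "Re (a * cnj b) = Re a * Re b + Im a * Im b" by simp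
  also have "\<dots> = cmod a * cmod b * (cos (Arg a) * cos (Arg b) + sin (Arg a) * sin (Arg b))"
    by (simp add: Re_cmod_cos Im_cmod_sin algebra_simps)
  also have "\<dots> = cmod a * cmod b * cos (Arg a - Arg b)" by (simp add: cos_diff)
  finally have e: "Re (a * cnj b) = cmod a * cmod b * cos (Arg a - Arg b)" by simp
  have "\<bar>Arg a\<bar> \<le> t" "\<bar>Arg b\<bar> \<le> pi/2 - t" using assms by (auto simp: cone_def)
  hence "cos (Arg a - Arg b) \<ge> 0" by (intro cos_ge_zero) auto
  thus ?thesis unfolding e by simp
qed

lemma norm_sum_sq: "cmod (a + b) ^ 2 = cmod a ^ 2 + cmod b ^ 2 + 2 * Re (a * cnj b)"
  unfolding cmod_power2 by (simp add: power2_eq_square algebra_simps)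

lemma nav_diff_cone:
  assumes "0 < \<theta>" "\<theta> < pi/2" "nav_path P \<theta> V"
  shows "i < j \<Longrightarrow> V j - V i \<in> cone \<theta>"
proof (induction j)
  case 0 then show ?case by simp
next
  case (Suc j)
  have s: "V (Suc j) - V j \<in> cone \<theta>"
    using assms(3) unfolding nav_path_def cone_at_def by auto
  show ?case
  proof (cases "i = j")
    case True then show ?thesis using s by simp
  next
    case False
    hence "V j - V i \<in> cone \<theta>" using Suc by simp
    from cone_add[OF assms(1,2) this s] show ?thesis by simp
  qed
qed

lemma hist_sub:
  "x \<in> hist \<theta> V n \<Longrightarrow> V 0 = 0 \<Longrightarrow> \<exists>k. 1 \<le> k \<and> k \<le> n \<and> cmod (x - V (k-1)) < cmod (V k - V (k-1))"
proof (induction \<theta> V n arbitrary: x rule: hist.induct)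
  case (1 \<theta> V) then show ?case by simp
next
  case (2 \<theta> V)
  hence "cmod (x - V 0) < cmod (V 1 - V 0)" by (simp add: incr_def dist_norm)
  thus ?case by (intro exI[of _ 1]) simp
next
  case (3 \<theta> V n)
  show ?case
  proof (cases "x \<in> hist \<theta> V (Suc n)")
    case True then show ?thesis using 3 by (metis le_Suc_eq)
  next
    case False
    hence "cmod (x - V (Suc n)) < cmod (V (Suc (Suc n)) - V (Suc n))"
      using 3(2) by (simp add: incr_def dist_norm norm_minus_commute)
    thus ?thesis by (intro exI[of _ "Suc (Suc n)"]) simp
  qed
qed

theorem lemma4p4:
  fixes \<theta> :: real and P :: "complex set" and V :: "nat \<Rightarrow> complex"
  assumes "0 < \<theta>" and "\<theta> < pi / 2"
    and "0 \<in> P" and "locally_finite P"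
    and "nav_path P \<theta> V"
  shows "\<forall>n. cone_at (pi / 2 - \<theta>) (V n) \<inter> hist \<theta> V n = {}"
proof (intro allI equalityI subsetI)
  fix n x assume x: "x \<in> cone_at (pi / 2 - \<theta>) (V n) \<inter> hist \<theta> V n"
  have V0: "V 0 = 0" using assms(5) by (simp add: nav_path_def)
  obtain k where k: "1 \<le> k" "k \<le> n" "cmod (x - V (k-1)) < cmod (V k - V (k-1))"
    using hist_sub[of x \<theta> V n] V0 x by blast
  have a: "V n - V (k-1) \<in> cone \<theta>" using nav_diff_cone[OF assms(1,2,5)] k by simp
  have b: "x - V n \<in> cone (pi/2 - \<theta>)" using x by (simp add: cone_at_def)
  have nn: "V n \<in> P \<inter> cone_at \<theta> (V (k-1))" 
  proof -
    have "V n \<in> P" using assms(5) k unfolding nav_path_def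
      by (metis IntD1 Suc_pred' less_le_trans zero_less_one)
    thus ?thesis using a by (simp add: cone_at_def)
  qed
  have "cmod (V (Suc (k-1)) - V (k-1)) \<le> cmod (V n - V (k-1))"
    using assms(5) nn unfolding nav_path_def by blast
  hence le: "cmod (V k - V (k-1)) \<le> cmod (V n - V (k-1))" using k by simp
  have bne: "x - V n \<noteq> 0" using b by (simp add: cone_def)
  have "cmod (x - V (k-1)) ^ 2 = cmod ((V n - V (k-1)) + (x - V n)) ^ 2" by simp
  also have "\<dots> = cmod (V n - V (k-1)) ^ 2 + cmod (x - V n) ^ 2 + 2 * Re ((V n - V (k-1)) * cnj (x - V n))"
    by (rule norm_sum_sq)
  also have "\<dots> \<ge> cmod (V n - V (k-1)) ^ 2"
    using inner_nonneg[OF assms(1,2) a b] by simp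
  finally have "cmod (V n - V (k-1)) \<le> cmod (x - V (k-1))"
    using power2_le_imp_le by fastforce
  with le k(3) show "x \<in> {}" by simp
qed simp

end
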